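(* Let $Q$ be a quantale, $M$ a $Q$-module, $\mathcal{B}\in\operatorname{mF}(Q)$ binormal over $M$ and $\mathcal{F}\in\operatorname{mF}(Q)$ 1-step over $M$. Then $\mathcal{B}+\mathcal{F}$ is 1-step over $M$.
   Context: A quantale is a poset $Q$ with all nonempty joins $\sum$ (no bottom required), top $1$, commutative associative multiplication with unit $1$ distributing over nonempty joins; a $Q$-module is a poset $M$ with all nonempty joins and an associative unital action distributing over nonempty joins in each variable. An m-filter is a subset of $Q$ containing $1$, upward closed and closed under multiplication; $\mathcal{B}+\mathcal{F}$ is the smallest m-filter containing $\mathcal{B}\cup\mathcal{F}$. Write $x\le^*\sum_ix_i$ if $x\le\sum_{i\in I_0}x_i$ for some finite nonempty $I_0$. For $a,b\in M$: $a\preceq^1_\mathcal{F}b$ means there are families $(a_i)$ in $M$, $(s_i)$ in $\mathcal{F}$ with $a\le\sum a_i$ and $s_ia_i\le b$; $a\preceq^n_\mathcal{F}b$ means a chain of $n$ such steps; $a\preceq_\mathcal{F}b$ means $a\preceq^n_\mathcal{F}b$ for some $n\ge1$. $\mathcal{F}$ is localizable over $M$ if for each $b$ there is $n_b$ with $a\preceq_\mathcal{F}b\Rightarrow a\preceq^{n_b}_\mathcal{F}b$; 1-step over $M$ if localizable and $a\preceq_\mathcal{F}b\Rightarrow a\preceq^1_\mathcal{F}b$. $\mathcal{N}$ is normal over $M$ if for all $s\in\mathcal{N}$, $m\in M$, families $(m_i)$ with $sm\le\sum_im_i$, there exist families $(m'_j)$ in $M$, $(s_j)$ in $\mathcal{N}$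 with $m\le\sum_jm'_j$ and $s_jm'_j\le^*\sum_im_i$. $\mathcal{C}$ is conormal over $M$ if for all $m,n\in M$ with $m\preceq^1_\mathcal{C}n$ there is $s\in\mathcal{C}$ with $sm\le n$. $\mathcal{B}$ is binormal over $M$ if it is both normal and conormal over $M$. *)

theory Defs
  imports Main
begin

text \<open>Orders of Q and M are the type-class orders of the carrier types 'q and 'm;
  the carriers are the whole types.  Families are represented by their sets of
  values (resp. sets of index-paired values); joins only depend on these.\<close>

definition is_lub :: "'a::order set \<Rightarrow> 'a \<Rightarrow> bool" where
  "is_lub A x \<longleftrightarrow> (\<forall>a\<in>A. a \<le> x) \<and> (\<forall>y. (\<forall>a\<in>A. a \<le> y) \<longrightarrow> x \<le> y)"

definition ne_complete :: "'a::order set \<Rightarrow> bool" where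
  "ne_complete U \<longleftrightarrow> (\<forall>A. A \<subseteq> U \<longrightarrow> A \<noteq> {} \<longrightarrow> (\<exists>x. is_lub A x))"

definition jn :: "'a::order set \<Rightarrow> 'a" where
  "jn A = (THE x. is_lub A x)"

definition quantale :: "('q::order \<Rightarrow> 'q \<Rightarrow> 'q) \<Rightarrow> 'q \<Rightarrow> bool" where
  "quantale mul e \<longleftrightarrow>
     ne_complete (UNIV :: 'q set) \<and>
     (\<forall>x. x \<le> e) \<and>
     (\<forall>x y z. mul (mul x y) z = mul x (mul y z)) \<and>
     (\<forall>x y. mul x y = mul y x) \<and>
     (\<forall>x. mul e x = x) \<and>
     (\<forall>a A. A \<noteq> {} \<longrightarrow> mul a (jn A) = jn (mul a ` A)) \<and>
     (\<forall>a A. A \<noteq> {} \<longrightarrow> mul (jn A) a = jn ((\<lambda>x. mul x a) ` A))"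

definition qmodule :: "('q::order \<Rightarrow> 'q \<Rightarrow> 'q) \<Rightarrow> 'q \<Rightarrow> ('q \<Rightarrow> 'm::order \<Rightarrow> 'm) \<Rightarrow> bool" where
  "qmodule mul e act \<longleftrightarrow>
     ne_complete (UNIV :: 'm set) \<and>
     (\<forall>s t m. act (mul s t) m = act s (act t m)) \<and>
     (\<forall>m. act e m = m) \<and>
     (\<forall>s A. A \<noteq> {} \<longrightarrow> act s (jn A) = jn (act s ` A)) \<and>
     (\<forall>S m. S \<noteq> {} \<longrightarrow> act (jn S) m = jn ((\<lambda>s. act s m) ` S))"

definition mfilter :: "('q::order \<Rightarrow> 'q \<Rightarrow> 'q) \<Rightarrow> 'q \<Rightarrow> 'q set \<Rightarrow> bool" where
  "mfilter mul e F \<longleftrightarrow> e \<in> F \<and> (\<forall>x y. x \<in> F \<longrightarrow> x \<le> y \<longrightarrow> y \<in> F) \<and>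
     (\<forall>x\<in>F. \<forall>y\<in>F. mul x y \<in> F)"

definition filter_sum :: "('q::order \<Rightarrow> 'q \<Rightarrow> 'q) \<Rightarrow> 'q \<Rightarrow> 'q set \<Rightarrow> 'q set \<Rightarrow> 'q set" where
  "filter_sum mul e B F = \<Inter> {G. mfilter mul e G \<and> B \<union> F \<subseteq> G}"

definition le_star :: "'m::order \<Rightarrow> 'm set \<Rightarrow> bool" where
  "le_star x X \<longleftrightarrow> (\<exists>X0. X0 \<subseteq> X \<and> finite X0 \<and> X0 \<noteq> {} \<and> x \<le> jn X0)"

definition prec1 :: "('q \<Rightarrow> 'm::order \<Rightarrow> 'm) \<Rightarrow> 'q set \<Rightarrow> 'm \<Rightarrow> 'm \<Rightarrow> bool" where
  "prec1 act F a b \<longleftrightarrow> (\<exists>P. P \<noteq> {} \<and> P \<subseteq> UNIV \<times> F \<and> a \<le> jn (fst ` P) \<and>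
      (\<forall>(x, s)\<in>P. act s x \<le> b))"

fun precn :: "('q \<Rightarrow> 'm::order \<Rightarrow> 'm) \<Rightarrow> 'q set \<Rightarrow> nat \<Rightarrow> 'm \<Rightarrow> 'm \<Rightarrow> bool" where
  "precn act F 0 a b \<longleftrightarrow> a = b"
| "precn act F (Suc n) a b \<longleftrightarrow> (\<exists>c. prec1 act F a c \<and> precn act F n c b)"

definition prec :: "('q \<Rightarrow> 'm::order \<Rightarrow> 'm) \<Rightarrow> 'q set \<Rightarrow> 'm \<Rightarrow> 'm \<Rightarrow> bool" where
  "prec act F a b \<longleftrightarrow> (\<exists>n\<ge>1. precn act F n a b)"

definition localizable :: "('q \<Rightarrow> 'm::order \<Rightarrow> 'm) \<Rightarrow> 'q set \<Rightarrow> bool" where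
  "localizable act F \<longleftrightarrow> (\<forall>b. \<exists>nb\<ge>1. \<forall>a. prec act F a b \<longrightarrow> precn act F nb a b)"

definition one_step :: "('q \<Rightarrow> 'm::order \<Rightarrow> 'm) \<Rightarrow> 'q set \<Rightarrow> bool" where
  "one_step act F \<longleftrightarrow> localizable act F \<and> (\<forall>a b. prec act F a b \<longrightarrow> prec1 act F a b)"

definition normal :: "('q \<Rightarrow> 'm::order \<Rightarrow> 'm) \<Rightarrow> 'q set \<Rightarrow> bool" where
  "normal act N \<longleftrightarrow> (\<forall>s\<in>N. \<forall>m X. X \<noteq> {} \<longrightarrow> act s m \<le> jn X \<longrightarrow>
      (\<exists>P. P \<noteq> {} \<and> P \<subseteq> UNIV \<times> N \<and> m \<le> jn (fst ` P) \<and>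
           (\<forall>(m', t)\<in>P. le_star (act t m') X)))"

definition conormal :: "('q \<Rightarrow> 'm::order \<Rightarrow> 'm) \<Rightarrow> 'q set \<Rightarrow> bool" where
  "conormal act C \<longleftrightarrow> (\<forall>m n. prec1 act C m n \<longrightarrow> (\<exists>s\<in>C. act s m \<le> n))"

definition binormal :: "('q \<Rightarrow> 'm::order \<Rightarrow> 'm) \<Rightarrow> 'q set \<Rightarrow> bool" where
  "binormal act B \<longleftrightarrow> normal act B \<and> conormal act B"

end

theory Submission
  imports Defs
begin

lemma lub_unique: "is_lub A x \<Longrightarrow> is_lub A y \<Longrightarrow> x = (y::'a::order)"
proof -
  assume a: "is_lub A x" and b: "is_lub A y"
  have "x \<le> y" using a b unfolding is_lub_def by blast
  moreover have "y \<le> x" using a b unfolding is_lub_def by blast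
  ultimately show ?thesis by (rule order.antisym)
qed

lemma jn_lub:
  fixes A :: "'a::order set"
  assumes "ne_complete (UNIV::'a set)" "A \<noteq> {}"
  shows "is_lub A (jn A)"
proof -
  have h: "\<forall>A. A \<subseteq> (UNIV::'a set) \<longrightarrow> A \<noteq> {} \<longrightarrow> (\<exists>x. is_lub A x)"
    using assms(1) unfolding ne_complete_def .
  have "\<exists>x. is_lub A x" using h[rule_format, of A] assms(2) by simp
  then obtain x where x: "is_lub A x" by (elim exE)
  show ?thesis unfolding jn_def
  proof (rule theI[of _ x])
    show "is_lub A x" by (rule x)
  next
    fix y assume "is_lub A y" then show "y = x" using x by (rule lub_unique)
  qed
qed

lemma jn_upper:
  fixes A :: "'a::order set"
  assumes "ne_complete (UNIV::'a set)" "x \<in> A"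
  shows "x \<le> jn A"
  using jn_lub[OF assms(1), of A] assms(2) unfolding is_lub_def by blast

lemma jn_least:
  fixes A :: "'a::order set"
  assumes "ne_complete (UNIV::'a set)" "A \<noteq> {}" "\<And>x. x \<in> A \<Longrightarrow> x \<le> y"
  shows "jn A \<le> y"
  using jn_lub[OF assms(1,2)] assms(3) unfolding is_lub_def by blast

lemma jn_mono:
  fixes A :: "'a::order set"
  assumes "ne_complete (UNIV::'a set)" "A \<noteq> {}" "A \<subseteq> A'"
  shows "jn A \<le> jn A'"
proof (rule jn_least[OF assms(1,2)])
  fix x assume "x \<in> A" then have "x \<in> A'" using assms(3) by blast
  then show "x \<le> jn A'" by (rule jn_upper[OF assms(1)])
qed

lemma jn_pair:
  assumes "ne_complete (UNIV::'a::order set)" "x \<le> (y::'a)"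
  shows "jn {x, y} = y"
proof -
  have "is_lub {x,y} y" using assms(2) unfolding is_lub_def by auto
  then show ?thesis using jn_lub[OF assms(1), of "{x,y}"] lub_unique by blast
qed

locale setting =
  fixes mul :: "'q::order \<Rightarrow> 'q \<Rightarrow> 'q" and e :: 'q
    and act :: "'q \<Rightarrow> 'm::order \<Rightarrow> 'm"
  assumes Q: "quantale mul e" and M: "qmodule mul e act"
begin

lemma Qd: "ne_complete (UNIV :: 'q set) \<and>
     (\<forall>x. x \<le> e) \<and>
     (\<forall>x y z. mul (mul x y) z = mul x (mul y z)) \<and>
     (\<forall>x y. mul x y = mul y x) \<and>
     (\<forall>x. mul e x = x) \<and>
     (\<forall>a A. A \<noteq> {} \<longrightarrow> mul a (jn A) = jn (mul a ` A)) \<and>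
     (\<forall>a A. A \<noteq> {} \<longrightarrow> mul (jn A) a = jn ((\<lambda>x. mul x a) ` A))"
  using Q unfolding quantale_def .
lemma Md: "ne_complete (UNIV :: 'm set) \<and>
     (\<forall>s t m. act (mul s t) m = act s (act t m)) \<and>
     (\<forall>m. act e m = m) \<and>
     (\<forall>s A. A \<noteq> {} \<longrightarrow> act s (jn A) = jn (act s ` A)) \<and>
     (\<forall>S m. S \<noteq> {} \<longrightarrow> act (jn S) m = jn ((\<lambda>s. act s m) ` S))"
  using M unfolding qmodule_def .
lemma Qc: "ne_complete (UNIV :: 'q set)" using Qd by (rule conjunct1)
lemma Mc: "ne_complete (UNIV :: 'm set)" using Md by (rule conjunct1)
lemma top: "x \<le> e" using Qd[THEN conjunct2, THEN conjunct1] by (rule spec)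
lemma assoc: "mul (mul x y) z = mul x (mul y z)"
  using Qd[THEN conjunct2, THEN conjunct2, THEN conjunct1] by (elim allE)
lemma comm: "mul x y = mul y x"
  using Qd[THEN conjunct2, THEN conjunct2, THEN conjunct2, THEN conjunct1] by (elim allE)
lemma unitl: "mul e x = x"
  using Qd[THEN conjunct2, THEN conjunct2, THEN conjunct2, THEN conjunct2, THEN conjunct1] by (elim allE)
lemma unitr: "mul x e = x" using unitl[of x] comm[of x e] by simp
lemma mul_jn: "A \<noteq> {} \<Longrightarrow> mul a (jn A) = jn (mul a ` A)"
  using Qd[THEN conjunct2, THEN conjunct2, THEN conjunct2, THEN conjunct2, THEN conjunct2, THEN conjunct1] by (elim allE impE)
lemma act_mul: "act (mul s t) m = act s (act t m)"
  using Md[THEN conjunct2, THEN conjunct1] by (elim allE)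
lemma act_e: "act e m = m"
  using Md[THEN conjunct2, THEN conjunct2, THEN conjunct1] by (elim allE)
lemma act_jn: "A \<noteq> {} \<Longrightarrow> act s (jn A) = jn (act s ` A)"
  using Md[THEN conjunct2, THEN conjunct2, THEN conjunct2, THEN conjunct1] by (elim allE impE)
lemma act_jnq: "S \<noteq> {} \<Longrightarrow> act (jn S) m = jn ((\<lambda>s. act s m) ` S)"
  using Md[THEN conjunct2, THEN conjunct2, THEN conjunct2, THEN conjunct2] by (elim allE impE)

lemma mul_mono: "x \<le> y \<Longrightarrow> mul a x \<le> mul a y"
proof -
  assume "x \<le> y"
  then have "mul a y = mul a (jn {x,y})" using jn_pair[OF Qc] by simp
  also have "\<dots> = jn {mul a x, mul a y}" using mul_jn[of "{x,y}" a] by simp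
  finally show ?thesis using jn_upper[OF Qc, of "mul a x" "{mul a x, mul a y}"] by simp
qed

lemma mul_mono2: "x \<le> y \<Longrightarrow> x' \<le> y' \<Longrightarrow> mul x x' \<le> mul y y'"
proof -
  assume "x \<le> y" "x' \<le> y'"
  have "mul x x' \<le> mul x y'" using mul_mono[OF \<open>x' \<le> y'\<close>] .
  also have "\<dots> = mul y' x" by (rule comm)
  also have "\<dots> \<le> mul y' y" using mul_mono[OF \<open>x \<le> y\<close>] .
  also have "\<dots> = mul y y'" by (rule comm)
  finally show ?thesis .
qed

lemma mul_le: "mul a x \<le> a"
proof -
  have "mul a x \<le> mul a e" by (rule mul_mono[OF top])
  then show ?thesis using unitr by simp
qed

lemma act_mono: "x \<le> y \<Longrightarrow> act s x \<le> act s y"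
proof -
  assume "x \<le> y"
  then have "act s y = act s (jn {x,y})" using jn_pair[OF Mc] by simp
  also have "\<dots> = jn {act s x, act s y}" using act_jn[of "{x,y}" s] by simp
  finally show ?thesis using jn_upper[OF Mc, of "act s x" "{act s x, act s y}"] by simp
qed

lemma act_monoq: "s \<le> t \<Longrightarrow> act s x \<le> act t x"
proof -
  assume "s \<le> t"
  then have "act t x = act (jn {s,t}) x" using jn_pair[OF Qc] by simp
  also have "\<dots> = jn {act s x, act t x}" using act_jnq[of "{s,t}" x] by simp
  finally show ?thesis using jn_upper[OF Mc, of "act s x" "{act s x, act t x}"] by simp
qed

lemma act_le1: "mul t f \<le> s \<Longrightarrow> act s x \<le> b \<Longrightarrow> act t (act f x) \<le> b"
proof -
  assume a: "mul t f \<le> s" "act s x \<le> b"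
  have "act t (act f x) = act (mul t f) x" by (simp add: act_mul)
  also have "\<dots> \<le> act s x" using a(1) by (rule act_monoq)
  finally show ?thesis using a(2) by (rule order.trans)
qed

lemma act_le2: "act f x \<le> c \<Longrightarrow> act t c \<le> b \<Longrightarrow> act (mul t f) x \<le> b"
proof -
  assume a: "act f x \<le> c" "act t c \<le> b"
  have "act (mul t f) x = act t (act f x)" by (simp add: act_mul)
  also have "\<dots> \<le> act t c" using a(1) by (rule act_mono)
  finally show ?thesis using a(2) by (rule order.trans)
qed

definition D :: "'q set \<Rightarrow> 'm \<Rightarrow> 'm set" where
  "D S b = {x. \<exists>s\<in>S. act s x \<le> b}"

lemma prec1_iff: "prec1 act S a b \<longleftrightarrow> D S b \<noteq> {} \<and> a \<le> jn (D S b)"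
proof
  assume "prec1 act S a b"
  then obtain P where P: "P \<noteq> {}" "P \<subseteq> UNIV \<times> S" "a \<le> jn (fst ` P)"
    "\<forall>(x, s)\<in>P. act s x \<le> b" unfolding prec1_def by blast
  have sub: "fst ` P \<subseteq> D S b" using P(2,4) unfolding D_def by force
  then have "D S b \<noteq> {}" using P(1) by blast
  moreover have "jn (fst ` P) \<le> jn (D S b)" using jn_mono[OF Mc _ sub] P(1) by blast
  ultimately show "D S b \<noteq> {} \<and> a \<le> jn (D S b)" using P(3) by auto
next
  assume h: "D S b \<noteq> {} \<and> a \<le> jn (D S b)"
  define P where "P = {(x,s). s \<in> S \<and> act s x \<le> b}"
  have "fst ` P = D S b" unfolding P_def D_def by force
  then show "prec1 act S a b" unfolding prec1_def using h
    by (intro exI[of _ P]) (auto simp: P_def D_def)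
qed

lemma D_le: "x \<in> D S b \<Longrightarrow> x \<le> jn (D S b)" using jn_upper[OF Mc] .

definition G :: "'q set \<Rightarrow> 'q set \<Rightarrow> 'q set" where
  "G B F = {s. \<exists>t\<in>B. \<exists>f\<in>F. mul t f \<le> s}"

lemma G_eq:
  assumes B: "mfilter mul e B" and F: "mfilter mul e F"
  shows "filter_sum mul e B F = G B F"
proof
  have eB: "e \<in> B" and eF: "e \<in> F" using B F unfolding mfilter_def by auto
  have "mfilter mul e (G B F)" unfolding mfilter_def
  proof (intro conjI allI impI ballI)
    show "e \<in> G B F" unfolding G_def using eB eF top by blast
  next
    fix x y assume "x \<in> G B F" "x \<le> y" then show "y \<in> G B F"
      unfolding G_def using order.trans by blast
  next
    fix x y assume "x \<in> G B F" "y \<in> G B F"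
    then obtain t f t' f' where tf: "t\<in>B" "f\<in>F" "mul t f \<le> x" "t'\<in>B" "f'\<in>F" "mul t' f' \<le> y"
      unfolding G_def by blast
    have "mul (mul t t') (mul f f') = mul (mul t f) (mul t' f')"
      by (metis assoc comm)
    also have "\<dots> \<le> mul x y" using mul_mono2 tf by blast
    finally show "mul x y \<in> G B F" unfolding G_def using tf B F unfolding mfilter_def by blast
  qed
  moreover have "B \<union> F \<subseteq> G B F"
  proof
    fix x assume "x \<in> B \<union> F"
    then show "x \<in> G B F"
    proof
      assume "x \<in> B" then show ?thesis unfolding G_def using eF unitr[of x] by force
    next
      assume "x \<in> F" then show ?thesis unfolding G_def using eB unitl[of x] by force
    qed
  qed
  ultimately show "filter_sum mul e B F \<subseteq> G B F" unfolding filter_sum_def by blast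
next
  show "G B F \<subseteq> filter_sum mul e B F" unfolding filter_sum_def
  proof (rule Inter_greatest)
    fix H assume "H \<in> {G. mfilter mul e G \<and> B \<union> F \<subseteq> G}"
    then have H: "mfilter mul e H" "B \<union> F \<subseteq> H" by auto
    show "G B F \<subseteq> H"
    proof
      fix s assume "s \<in> G B F"
      then obtain t f where "t \<in> B" "f \<in> F" "mul t f \<le> s" unfolding G_def by blast
      then have "mul t f \<in> H" using H unfolding mfilter_def by blast
      then show "s \<in> H" using H(1) \<open>mul t f \<le> s\<close> unfolding mfilter_def by blast
    qed
  qed
qed

lemma fin_prod:
  assumes F: "mfilter mul e F" and "finite X0" "X0 \<noteq> {}" "X0 \<subseteq> D F b"
  shows "\<exists>f\<in>F. \<forall>x\<in>X0. act f x \<le> b"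
  using assms(2-4)
proof (induction X0 rule: finite_ne_induct)
  case (singleton x) then show ?case unfolding D_def by auto
next
  case (insert x X)
  then obtain f where f: "f \<in> F" "\<forall>y\<in>X. act f y \<le> b" by auto
  obtain g where g: "g \<in> F" "act g x \<le> b" using insert(5) unfolding D_def by auto
  have "mul f g \<in> F" using F f g unfolding mfilter_def by blast
  moreover have "act (mul f g) y \<le> act f y" for y using act_monoq[OF mul_le] .
  moreover have "act (mul f g) y \<le> act g y" for y using act_monoq[OF mul_le, of g f y] comm[of f g] by simp
  ultimately have "\<forall>y\<in>insert x X. act (mul f g) y \<le> b" using f g by (auto intro: order.trans)
  then show ?case using \<open>mul f g \<in> F\<close> by blast
qed

end

locale setting2 = setting mul e act
  for mul :: "'q::order \<Rightarrow> 'q \<Rightarrow> 'q" and e :: 'q and act :: "'q \<Rightarrow> 'm::order \<Rightarrow> 'm" +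
  fixes B F :: "'q set"
  assumes B: "mfilter mul e B" and Bb: "binormal act B"
    and F: "mfilter mul e F" and F1: "one_step act F"
begin

lemma Bn: "normal act B" and Bc: "conormal act B" using Bb unfolding binormal_def by auto

lemma decomp:
  assumes "prec1 act (G B F) a b"
  shows "\<exists>c. prec1 act F a c \<and> prec1 act B c b"
proof -
  have ne: "D (G B F) b \<noteq> {}" and a: "a \<le> jn (D (G B F) b)" using assms prec1_iff by auto
  define c where "c = jn (D B b)"
  have sub: "D (G B F) b \<subseteq> D F c"
  proof
    fix x assume "x \<in> D (G B F) b"
    then obtain s t f where "s \<in> G B F" "act s x \<le> b" "t\<in>B" "f\<in>F" "mul t f \<le> s"
      unfolding D_def G_def by blast
    then have "act t (act f x) \<le> b" by (intro act_le1)
    then have "act f x \<in> D B b" using \<open>t\<in>B\<close> unfolding D_def by blast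
    then have "act f x \<le> c" unfolding c_def by (rule D_le)
    then show "x \<in> D F c" using \<open>f\<in>F\<close> unfolding D_def by blast
  qed
  have "D B b \<noteq> {}"
  proof -
    obtain x where "x \<in> D (G B F) b" using ne by blast
    then obtain s t f where "s \<in> G B F" "act s x \<le> b" "t\<in>B" "f\<in>F" "mul t f \<le> s"
      unfolding D_def G_def by blast
    then have "act t (act f x) \<le> b" by (intro act_le1)
    then show ?thesis using \<open>t\<in>B\<close> unfolding D_def by blast
  qed
  then have "prec1 act B c b" unfolding prec1_iff c_def by simp
  moreover have "prec1 act F a c" unfolding prec1_iff
    using ne sub a jn_mono[OF Mc ne sub] by auto
  ultimately show ?thesis by blast
qed

lemma FB:
  assumes "prec1 act F a c" "prec1 act B c b"
  shows "prec1 act (G B F) a b"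
proof -
  obtain t where t: "t \<in> B" "act t c \<le> b" using Bc assms(2) unfolding conormal_def by blast
  have ne: "D F c \<noteq> {}" and a: "a \<le> jn (D F c)" using assms(1) prec1_iff by auto
  have sub: "D F c \<subseteq> D (G B F) b"
  proof
    fix x assume "x \<in> D F c"
    then obtain f where f: "f \<in> F" "act f x \<le> c" unfolding D_def by blast
    have "act (mul t f) x \<le> b" using f(2) t(2) by (rule act_le2)
    moreover have "mul t f \<in> G B F" unfolding G_def using t f by blast
    ultimately show "x \<in> D (G B F) b" unfolding D_def by blast
  qed
  show ?thesis unfolding prec1_iff using ne sub a jn_mono[OF Mc ne sub] by auto
qed

lemma BF:
  assumes "prec1 act B a c" "prec1 act F c b"
  shows "prec1 act (G B F) a b"
proof -
  have neB: "D B c \<noteq> {}" and a: "a \<le> jn (D B c)" using assms(1) prec1_iff by auto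
  have neF: "D F b \<noteq> {}" and c: "c \<le> jn (D F b)" using assms(2) prec1_iff by auto
  have key: "\<exists>P::('m \<times> 'q) set. P \<noteq> {} \<and> fst ` P \<subseteq> D (G B F) b \<and> x \<le> jn (fst ` P)" if x: "x \<in> D B c" for x
  proof -
    obtain t where t: "t \<in> B" "act t x \<le> c" using x unfolding D_def by blast
    have "act t x \<le> jn (D F b)" using t(2) c by (rule order.trans)
    then obtain P where P: "P \<noteq> {}" "P \<subseteq> UNIV \<times> B" "x \<le> jn (fst ` P)"
      "\<forall>(m', u)\<in>P. le_star (act u m') (D F b)"
      using Bn[unfolded normal_def, rule_format, OF t(1) neF \<open>act t x \<le> jn (D F b)\<close>]
      by (elim exE conjE) (rule that, assumption+)
    have sub: "fst ` P \<subseteq> D (G B F) b"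
    proof
      fix m' assume "m' \<in> fst ` P"
      then obtain u where mu: "(m', u) \<in> P" by force
      then have uB: "u \<in> B" using P(2) by blast
      have "le_star (act u m') (D F b)" using P(4) mu by auto
      then obtain X0 where X0: "X0 \<subseteq> D F b" "finite X0" "X0 \<noteq> {}" "act u m' \<le> jn X0"
        unfolding le_star_def by (elim exE conjE) simp
      obtain f where f: "f \<in> F" "\<forall>y\<in>X0. act f y \<le> b" using fin_prod[OF F X0(2,3,1)] by blast
      have "act f (jn X0) = jn (act f ` X0)" using X0(3) by (rule act_jn)
      also have "\<dots> \<le> b"
      proof (rule jn_least[OF Mc])
        show "act f ` X0 \<noteq> {}" using X0(3) by simp
      next
        fix y assume "y \<in> act f ` X0" then show "y \<le> b" using f(2) by auto
      qed
      finally have h: "act f (jn X0) \<le> b" .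
      have "act (mul f u) m' \<le> b" by (rule act_le2[OF X0(4) h])
      moreover have "mul u f \<le> mul f u" using comm[of f u] by simp
      then have "mul f u \<in> G B F" unfolding G_def using f(1) uB by blast
      ultimately show "m' \<in> D (G B F) b" unfolding D_def by blast
    qed
    show ?thesis
    proof (rule exI[of _ P], intro conjI)
      show "P \<noteq> {}" by (rule P(1))
      show "fst ` P \<subseteq> D (G B F) b" by (rule sub)
      show "x \<le> jn (fst ` P)" by (rule P(3))
    qed
  qed
  obtain x0 where "x0 \<in> D B c" using neB by blast
  then obtain P0 :: "('m \<times> 'q) set" where "P0 \<noteq> {}" "fst ` P0 \<subseteq> D (G B F) b" using key by blast
  then have neG: "D (G B F) b \<noteq> {}" by blast
  have "jn (D B c) \<le> jn (D (G B F) b)"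
  proof (rule jn_least[OF Mc neB])
    fix x assume "x \<in> D B c"
    then obtain P :: "('m \<times> 'q) set" where P: "P \<noteq> {}" "fst ` P \<subseteq> D (G B F) b" "x \<le> jn (fst ` P)" using key by blast
    have "jn (fst ` P) \<le> jn (D (G B F) b)" using jn_mono[OF Mc _ P(2)] P(1) by blast
    then show "x \<le> jn (D (G B F) b)" using P(3) by (rule order.trans[rotated])
  qed
  then have "a \<le> jn (D (G B F) b)" using a by (rule order.trans[rotated])
  then show ?thesis unfolding prec1_iff using neG by blast
qed

lemma Btrans:
  assumes "prec1 act B a c" "prec1 act B c b"
  shows "prec1 act B a b"
proof -
  obtain t where t: "t \<in> B" "act t c \<le> b" using Bc assms(2) unfolding conormal_def by blast
  have ne: "D B c \<noteq> {}" and a: "a \<le> jn (D B c)" using assms(1) prec1_iff by auto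
  have sub: "D B c \<subseteq> D B b"
  proof
    fix x assume "x \<in> D B c"
    then obtain f where f: "f \<in> B" "act f x \<le> c" unfolding D_def by blast
    have "act (mul t f) x \<le> b" using f(2) t(2) by (rule act_le2)
    moreover have "mul t f \<in> B" using B t f unfolding mfilter_def by blast
    ultimately show "x \<in> D B b" unfolding D_def by blast
  qed
  show ?thesis unfolding prec1_iff using ne sub a jn_mono[OF Mc ne sub] by auto
qed

lemma Ftrans:
  assumes "prec1 act F a c" "prec1 act F c b"
  shows "prec1 act F a b"
proof -
  have "precn act F 2 a b" using assms by (auto simp: numeral_2_eq_2)
  then have "prec act F a b" unfolding prec_def by (intro exI[of _ 2]) auto
  then show ?thesis using F1 unfolding one_step_def by blast
qed

lemma Gtrans:
  assumes "prec1 act (G B F) a c" "prec1 act (G B F) c b"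
  shows "prec1 act (G B F) a b"
proof -
  obtain x where x: "prec1 act F a x" "prec1 act B x c" using decomp assms(1) by blast
  obtain y where y: "prec1 act F c y" "prec1 act B y b" using decomp assms(2) by blast
  have "prec1 act (G B F) x y" using BF x(2) y(1) .
  then obtain z where z: "prec1 act F x z" "prec1 act B z y" using decomp by blast
  have "prec1 act F a z" using Ftrans x(1) z(1) .
  moreover have "prec1 act B z b" using Btrans z(2) y(2) .
  ultimately show ?thesis using FB by blast
qed

lemma Gn: "n \<ge> 1 \<Longrightarrow> precn act (G B F) n a b \<Longrightarrow> prec1 act (G B F) a b"
proof (induction n arbitrary: a)
  case 0 then show ?case by simp
next
  case (Suc n)
  then obtain c where c: "prec1 act (G B F) a c" "precn act (G B F) n c b" by auto
  show ?case
  proof (cases "n = 0")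
    case True then show ?thesis using c by simp
  next
    case False then show ?thesis using Suc.IH[of c] c Gtrans by simp
  qed
qed

lemma G1: "one_step act (G B F)"
  unfolding one_step_def localizable_def
proof (intro conjI allI impI)
  fix a b assume "prec act (G B F) a b"
  then show "prec1 act (G B F) a b" unfolding prec_def using Gn by blast
next
  fix b show "\<exists>nb\<ge>1. \<forall>a. prec act (G B F) a b \<longrightarrow> precn act (G B F) nb a b"
  proof (intro exI[of _ 1] conjI allI impI)
    fix a assume "prec act (G B F) a b"
    then have "prec1 act (G B F) a b" unfolding prec_def using Gn by blast
    then show "precn act (G B F) 1 a b" by simp
  qed simp
qed

end

theorem mainTheorem14:
  fixes mul :: "'q::order \<Rightarrow> 'q \<Rightarrow> 'q" and e :: 'q
    and act :: "'q \<Rightarrow> 'm::order \<Rightarrow> 'm"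
    and B F :: "'q set"
  assumes "quantale mul e"
    and "qmodule mul e act"
    and "mfilter mul e B" and "binormal act B"
    and "mfilter mul e F" and "one_step act F"
  shows "one_step act (filter_sum mul e B F)"
proof -
  interpret setting2 mul e act B F using assms by unfold_locales
  show ?thesis using G1 G_eq[OF B F] by simp
qed

end
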